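(* Let $Y$ be a random variable whose moment generating function $E[e^{tY}]$ exists for $|t|<r_0$ for some $r_0>0$. Let $(Y_j)_{j\ge1}$ be mutually independent copies of $Y$, $S_0=0$, $S_k=Y_1+\cdots+Y_k$ for $k\ge1$. Define $\phi_n^Y(x,y)$ by $$\Big(1+y\big(E[e^{Yt}]-1\big)\Big)^{x}=\sum_{n=0}^{\infty}\phi_n^Y(x,y)\frac{t^n}{n!}.$$ Then for all integers $m,n\ge 0$, $$\phi_{m+n}^Y(x,y)=\sum_{k=0}^{n}\sum_{j=0}^{m}\binom{m}{j}\phi_j^Y(x-k,y)(x)_k y^k\frac{1}{k!}\sum_{l_1+\cdots+l_k=n}\binom{n}{l_1,\dots,l_k}E\Big[S_k^{m-j}\prod_{i=1}^{k}Y_i^{l_i}\Big],$$ where the inner sum runs over $k$-tuples $(l_1,\dots,l_k)$ of positive integers with sum $n$.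
   Context: $(x)_0=1$, $(x)_k=x(x-1)\cdots(x-k+1)$ for $k\ge1$. The power $(1+u)^x$ is understood via the binomial series $\sum_{k\ge0}\binom{x}{k}u^k$ and the defining identity is one of power series in $t$; $x,y$ are variables. For $k=0$ the sum over $(l_1,\dots,l_k)$ is the empty-composition sum, equal to $1$ if $n=0$ and $0$ otherwise (empty product equal to $1$). $\binom{n}{l_1,\dots,l_k}$ is the multinomial coefficient. *)

theory Defs
  imports "HOL-Probability.Probability" "HOL-Computational_Algebra.Formal_Power_Series"
begin

definition falling :: "real \<Rightarrow> nat \<Rightarrow> real" where
  "falling x k = (\<Prod>i<k. x - real i)"

text \<open>(1+u)^x via the binomial series sum_k (x choose k) u^k, for a formal power series
  u with zero constant term (then only k \<le> n contributes to the n-th coefficient).\<close>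
definition fps_binom_pow :: "real fps \<Rightarrow> real \<Rightarrow> real fps" where
  "fps_binom_pow u x = Abs_fps (\<lambda>n. \<Sum>k\<le>n. (x gchoose k) * fps_nth (u ^ k) n)"

text \<open>The moment generating function E[e^{tY}] as a power series in t:
  sum_n E[Y^n] t^n / n!.\<close>
definition mgf_fps :: "'a measure \<Rightarrow> ('a \<Rightarrow> real) \<Rightarrow> real fps" where
  "mgf_fps M Y = Abs_fps (\<lambda>n. (\<integral>\<omega>. Y \<omega> ^ n \<partial>M) / fact n)"

definition phi :: "'a measure \<Rightarrow> ('a \<Rightarrow> real) \<Rightarrow> nat \<Rightarrow> real \<Rightarrow> real \<Rightarrow> real" where
  "phi M Y n x y = fact n * fps_nth (fps_binom_pow (fps_const y * (mgf_fps M Y - 1)) x) n"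

end

theory Submission
  imports Defs "HOL-Computational_Algebra.Polynomial"
begin


lemma fps_prod_nth:
  fixes f :: "'i \<Rightarrow> 'b::comm_semiring_1 fps"
  assumes "finite I"
  shows "fps_nth (\<Prod>i\<in>I. f i) n = (\<Sum>a\<in>{a \<in> I \<rightarrow>\<^sub>E {..n}. sum a I = n}. \<Prod>i\<in>I. fps_nth (f i) (a i))"
  using assms
proof (induction I arbitrary: n rule: finite_induct)
  case empty
  show ?case by (cases n) auto
next
  case (insert j I)
  have "fps_nth (\<Prod>i\<in>insert j I. f i) n = fps_nth (f j * (\<Prod>i\<in>I. f i)) n"
    using insert by simp
  also have "\<dots> = (\<Sum>c=0..n. fps_nth (f j) c * fps_nth (\<Prod>i\<in>I. f i) (n - c))"
    by (simp add: fps_mult_nth)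
  also have "\<dots> = (\<Sum>c=0..n. \<Sum>a\<in>{a \<in> I \<rightarrow>\<^sub>E {..n-c}. sum a I = n - c}. fps_nth (f j) c * (\<Prod>i\<in>I. fps_nth (f i) (a i)))"
    by (simp add: insert.IH sum_distrib_left)
  also have "\<dots> = (\<Sum>(c,a)\<in>(SIGMA c:{0..n}. {a \<in> I \<rightarrow>\<^sub>E {..n-c}. sum a I = n - c}). fps_nth (f j) c * (\<Prod>i\<in>I. fps_nth (f i) (a i)))"
    proof (rule sum.Sigma)
    show "\<forall>c\<in>{0..n}. finite {a \<in> I \<rightarrow>\<^sub>E {..n-c}. sum a I = n - c}"
      using insert.hyps by (auto intro!: finite_PiE)
  qed simp
  also have "\<dots> = (\<Sum>a\<in>{a \<in> insert j I \<rightarrow>\<^sub>E {..n}. sum a (insert j I) = n}. \<Prod>i\<in>insert j I. fps_nth (f i) (a i))"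
  proof (rule sum.reindex_bij_witness[of _ "\<lambda>g. (g j, g(j := undefined))" "\<lambda>(c,a). a(j := c)"])
    fix g assume g: "g \<in> {a \<in> insert j I \<rightarrow>\<^sub>E {..n}. sum a (insert j I) = n}"
    have s: "sum g (insert j I) = g j + sum g I" using insert.hyps by simp
    have le: "g i \<le> sum g I" if "i \<in> I" for i
      using that insert.hyps by (intro member_le_sum) auto
    show "(case (g j, g(j := undefined)) of (c, a) \<Rightarrow> a(j := c)) = g" by auto
    have "sum (g(j := undefined)) I = sum g I"
      using insert.hyps by (intro sum.cong) auto
    then show "(g j, g(j := undefined)) \<in> (SIGMA c:{0..n}. {a \<in> I \<rightarrow>\<^sub>E {..n - c}. sum a I = n - c})"
      using g s le insert.hyps by (auto simp: PiE_def extensional_def Pi_def)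
  next
    fix ca assume ca: "ca \<in> (SIGMA c:{0..n}. {a \<in> I \<rightarrow>\<^sub>E {..n - c}. sum a I = n - c})"
    obtain c a where [simp]: "ca = (c, a)" by (cases ca)
    have "sum (a(j := c)) I = sum a I"
      using insert.hyps by (intro sum.cong) auto
    then show "(case ca of (c, a) \<Rightarrow> a(j := c)) \<in> {a \<in> insert j I \<rightarrow>\<^sub>E {..n}. sum a (insert j I) = n}"
      using ca insert.hyps by (auto simp: PiE_def extensional_def Pi_def)
    show "(\<lambda>g. (g j, g(j := undefined))) (case ca of (c, a) \<Rightarrow> a(j := c)) = ca"
      using ca insert.hyps by (auto simp: PiE_def extensional_def fun_eq_iff)
    have *: "(\<Prod>i\<in>I. fps_nth (f i) ((a(j := c)) i)) = (\<Prod>i\<in>I. fps_nth (f i) (a i))"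
      using insert.hyps by (intro prod.cong) auto
    show "(\<Prod>i\<in>insert j I. fps_nth (f i) ((case ca of (c, a) \<Rightarrow> a(j := c)) i)) = (case ca of (c, a) \<Rightarrow> fps_nth (f j) c * (\<Prod>i\<in>I. fps_nth (f i) (a i)))"
      using insert.hyps * by simp
  qed
  finally show ?case .
qed

definition Tsh :: "real fps \<Rightarrow> real fps fps" where
  "Tsh f = Abs_fps (\<lambda>a. Abs_fps (\<lambda>b. of_nat ((a+b) choose a) * fps_nth f (a+b)))"

lemma T_nth: "fps_nth (fps_nth (Tsh f) a) b = of_nat ((a+b) choose a) * fps_nth f (a+b)"
  by (simp add: Tsh_def)

lemma vand_aux:
  assumes "c \<le> a + b"
  shows "(\<Sum>i\<in>{i. i \<le> a \<and> i \<le> c \<and> c - i \<le> b}. (c choose i) * ((a+b-c) choose (a-i))) = (a+b) choose a"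
proof -
  have "(\<Sum>i\<in>{i. i \<le> a \<and> i \<le> c \<and> c - i \<le> b}. (c choose i) * ((a+b-c) choose (a-i)))
      = (\<Sum>i\<le>a. (c choose i) * ((a+b-c) choose (a-i)))"
  proof (rule sum.mono_neutral_left)
    show "\<forall>i\<in>{..a} - {i. i \<le> a \<and> i \<le> c \<and> c - i \<le> b}. (c choose i) * ((a+b-c) choose (a-i)) = 0"
      using assms by auto
  qed auto
  also have "\<dots> = (c + (a+b-c)) choose a" by (rule vandermonde)
  also have "c + (a+b-c) = a + b" using assms by simp
  finally show ?thesis .
qed

lemma T_mult: "Tsh (f * g) = Tsh f * Tsh g"
proof (rule fps_ext, rule fps_ext)
  fix a b
  define F where "F = (\<lambda>i j. of_nat ((i+j) choose i) * fps_nth f (i+j) * (of_nat ((a-i+(b-j)) choose (a-i)) * fps_nth g (a-i+(b-j))) :: real)"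
  have "fps_nth (fps_nth (Tsh f * Tsh g) a) b = (\<Sum>i=0..a. \<Sum>j=0..b. F i j)"
    by (simp add: fps_mult_nth fps_sum_nth T_nth F_def add_ac)
  also have "\<dots> = (\<Sum>(i,j)\<in>(SIGMA i:{0..a}. {0..b}). F i j)"
    by (rule sum.Sigma) auto
  also have "\<dots> = (\<Sum>(c,i)\<in>(SIGMA c:{0..a+b}. {i. i \<le> a \<and> i \<le> c \<and> c - i \<le> b}). F i (c - i))"
    by (rule sum.reindex_bij_witness[of _ "\<lambda>(c,i). (i, c - i)" "\<lambda>(i,j). (i+j, i)"]) auto
  also have "\<dots> = (\<Sum>c=0..a+b. \<Sum>i\<in>{i. i \<le> a \<and> i \<le> c \<and> c - i \<le> b}. F i (c - i))"
    by (rule sum.Sigma[symmetric]) auto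
  also have "\<dots> = (\<Sum>c=0..a+b. fps_nth f c * fps_nth g (a+b-c) * of_nat (\<Sum>i\<in>{i. i \<le> a \<and> i \<le> c \<and> c - i \<le> b}. (c choose i) * ((a+b-c) choose (a-i))))"
  proof (rule sum.cong[OF refl])
    fix c assume c: "c \<in> {0..a+b}"
    show "(\<Sum>i\<in>{i. i \<le> a \<and> i \<le> c \<and> c - i \<le> b}. F i (c - i)) = fps_nth f c * fps_nth g (a+b-c) * of_nat (\<Sum>i\<in>{i. i \<le> a \<and> i \<le> c \<and> c - i \<le> b}. (c choose i) * ((a+b-c) choose (a-i)))"
      unfolding of_nat_sum sum_distrib_left
    proof (rule sum.cong[OF refl])
      fix i assume i: "i \<in> {i. i \<le> a \<and> i \<le> c \<and> c - i \<le> b}"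
      then have e1: "i + (c - i) = c" and e2: "a - i + (b - (c - i)) = a + b - c" using c by auto
      show "F i (c - i) = fps_nth f c * fps_nth g (a+b-c) * of_nat ((c choose i) * ((a+b-c) choose (a-i)))"
        unfolding F_def e1 e2 by simp
    qed
  qed
  also have "\<dots> = (\<Sum>c=0..a+b. fps_nth f c * fps_nth g (a+b-c) * of_nat ((a+b) choose a))"
    by (rule sum.cong[OF refl]) (simp add: vand_aux)
  also have "\<dots> = fps_nth (fps_nth (Tsh (f * g)) a) b"
    by (simp add: T_nth fps_mult_nth sum_distrib_left mult_ac)
  finally show "fps_nth (fps_nth (Tsh (f * g)) a) b = fps_nth (fps_nth (Tsh f * Tsh g) a) b" ..
qed

lemma T_add: "Tsh (f + g) = Tsh f + Tsh g"
  by (rule fps_ext, rule fps_ext) (simp add: T_nth algebra_simps)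

lemma T_const: "Tsh (fps_const c) = fps_const (fps_const c)"
  by (rule fps_ext, rule fps_ext) (auto simp: T_nth)

lemma T_one: "Tsh 1 = 1"
  using T_const[of 1] by simp

lemma T_power: "Tsh (f ^ N) = Tsh f ^ N"
  by (induction N) (simp_all add: T_one T_mult)

lemma pow_nth_zero:
  fixes f :: "'b::{comm_ring_1} fps"
  assumes "fps_nth f 0 = 0" "n < i"
  shows "fps_nth (f ^ i) n = 0"
proof (cases "f = 0")
  case True
  then show ?thesis using assms by (simp add: zero_power)
next
  case False
  then have "subdegree f \<noteq> 0" using assms subdegree_eq_0_iff by blast
  then have "n < i * subdegree f" using assms(2)
  proof -
    have "i \<le> i * subdegree f" using \<open>subdegree f \<noteq> 0\<close> by simp
    then show ?thesis using assms(2) by linarith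
  qed
  then show ?thesis by (rule fps_pow_nth_below_subdegree)
qed

lemma binom_pow_nat:
  assumes "fps_nth u 0 = 0"
  shows "fps_binom_pow u (real N) = (1 + u) ^ N"
proof (rule fps_ext)
  fix n
  have "fps_nth (fps_binom_pow u (real N)) n = (\<Sum>i\<le>n. (real N gchoose i) * fps_nth (u ^ i) n)"
    by (simp add: fps_binom_pow_def)
  also have "\<dots> = (\<Sum>i\<le>max N n. real (N choose i) * fps_nth (u ^ i) n)"
  proof (rule sum.mono_neutral_cong_left)
    show "\<forall>i\<in>{..max N n} - {..n}. real (N choose i) * fps_nth (u ^ i) n = 0"
      by (simp add: pow_nth_zero[OF assms])
  qed (auto simp: binomial_gbinomial[symmetric])
  also have "\<dots> = (\<Sum>i\<le>N. real (N choose i) * fps_nth (u ^ i) n)"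
  proof (rule sum.mono_neutral_right)
    show "\<forall>i\<in>{..max N n} - {..N}. real (N choose i) * fps_nth (u ^ i) n = 0"
      by auto
  qed auto
  also have "\<dots> = fps_nth ((u + 1) ^ N) n"
    unfolding binomial_ring by (simp add: fps_sum_nth)
  finally show "fps_nth (fps_binom_pow u (real N)) n = fps_nth ((1 + u) ^ N) n"
    by (simp add: add.commute)
qed

lemma nat_identity:
  fixes A :: "real fps" and y :: real
  assumes A0: "fps_nth A 0 = 0"
  defines "u \<equiv> fps_const y * A"
  defines "G \<equiv> Tsh A - fps_const A"
  shows "fact (m+n) * fps_nth ((1+u)^N) (m+n) =
    (\<Sum>k\<le>n. \<Sum>j\<le>m. of_nat (m choose j) * (fact j * fps_nth ((1+u)^(N-k)) j) * of_nat (N choose k) * y^k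
        * (fact n * fact (m-j) * fps_nth (fps_nth (G^k) n) (m-j)))"
proof -
  have G0: "fps_nth G 0 = 0"
    by (simp add: G_def Tsh_def fps_eq_iff)
  have TU: "Tsh ((1+u)^N) = (fps_const (fps_const y) * G + fps_const (1+u))^N"
  proof -
    have "Tsh (1+u) = fps_const (fps_const y) * G + fps_const (1+u)"
      unfolding u_def G_def T_add T_one T_mult T_const
      by (simp add: algebra_simps fps_const_mult[symmetric] del: fps_const_mult)
    then show ?thesis by (simp add: T_power)
  qed
  have TU2: "Tsh ((1+u)^N) = (\<Sum>k\<le>N. of_nat (N choose k) * (fps_const (fps_const y) * G)^k * fps_const (1+u)^(N-k))"
    unfolding TU by (rule binomial_ring)
  have trm: "fps_nth (fps_nth (of_nat c * (fps_const (fps_const y) * G)^k * fps_const B ^ e) n) m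
     = of_nat c * y^k * (\<Sum>j=0..m. fps_nth (B^e) j * fps_nth (fps_nth (G^k) n) (m-j))" for c k B e
  proof -
    define Pk where "Pk = B ^ e"
    have e: "of_nat c * (fps_const (fps_const y) * G)^k * fps_const B ^ e = fps_const (fps_const (of_nat c * y^k)) * (G^k * fps_const Pk)"
      by (simp add: power_mult_distrib fps_of_nat[symmetric] mult_ac Pk_def)
    have "fps_nth (fps_nth (fps_const (fps_const (of_nat c * y^k)) * (G^k * fps_const Pk)) n) m
        = of_nat c * y^k * fps_nth (Pk * fps_nth (G^k) n) m"
      by (simp add: mult.commute)
    also have "\<dots> = of_nat c * y^k * (\<Sum>j=0..m. fps_nth Pk j * fps_nth (fps_nth (G^k) n) (m-j))"
      by (simp only: fps_mult_nth)
    finally show ?thesis unfolding e Pk_def .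
  qed
  define P where "P k = (1+u)^(N-k)" for k
  define Q where "Q k = fps_nth (G^k) n" for k
  have "of_nat ((n+m) choose n) * fps_nth ((1+u)^N) (n+m) = fps_nth (fps_nth (Tsh ((1+u)^N)) n) m"
    by (simp add: T_nth)
  also have "\<dots> = (\<Sum>k\<le>N. of_nat (N choose k) * y^k * (\<Sum>j=0..m. fps_nth (P k) j * fps_nth (Q k) (m-j)))"
    unfolding TU2 fps_sum_nth trm P_def Q_def ..
  finally have E1: "of_nat ((n+m) choose n) * fps_nth ((1+u)^N) (n+m) = (\<Sum>k\<le>N. of_nat (N choose k) * y^k * (\<Sum>j=0..m. fps_nth (P k) j * fps_nth (Q k) (m-j)))" .
  have fmn0: "fact n * fact m * ((n+m) choose n) = (fact (n+m) :: nat)"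
    using binomial_fact_lemma[of n "n+m"] by simp
  have fmn: "fact (n+m) = (fact m * fact n * of_nat ((n+m) choose n) :: real)"
  proof -
    have "real (fact n * fact m * ((n+m) choose n)) = real (fact (n+m))" using fmn0 by simp
    then have h: "fact n * fact m * real ((n+m) choose n) = (fact (n+m) :: real)" unfolding of_nat_mult of_nat_fact .
    show ?thesis using h by (metis mult.commute)
  qed
  have "fact (m+n) * fps_nth ((1+u)^N) (m+n) = fact m * fact n * (of_nat ((n+m) choose n) * fps_nth ((1+u)^N) (n+m))"
    unfolding add.commute[of m n] fmn by (simp only: mult.assoc)
  also have "\<dots> = fact m * fact n * (\<Sum>k\<le>N. of_nat (N choose k) * y^k * (\<Sum>j=0..m. fps_nth (P k) j * fps_nth (Q k) (m-j)))"
    unfolding E1 ..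
  also have "\<dots> = fact m * fact n * (\<Sum>k\<le>n. of_nat (N choose k) * y^k * (\<Sum>j=0..m. fps_nth (P k) j * fps_nth (Q k) (m-j)))"
  proof -
    have "(\<Sum>k\<le>N. of_nat (N choose k) * y^k * (\<Sum>j=0..m. fps_nth (P k) j * fps_nth (Q k) (m-j)))
       = (\<Sum>k\<le>max N n. of_nat (N choose k) * y^k * (\<Sum>j=0..m. fps_nth (P k) j * fps_nth (Q k) (m-j)))"
      by (rule sum.mono_neutral_left) auto
    also have "\<dots> = (\<Sum>k\<le>n. of_nat (N choose k) * y^k * (\<Sum>j=0..m. fps_nth (P k) j * fps_nth (Q k) (m-j)))"
    proof (rule sum.mono_neutral_right)
      show "\<forall>k\<in>{..max N n} - {..n}. of_nat (N choose k) * y^k * (\<Sum>j=0..m. fps_nth (P k) j * fps_nth (Q k) (m-j)) = 0"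
        by (simp add: Q_def pow_nth_zero[OF G0])
    qed auto
    finally show ?thesis by simp
  qed
  also have "\<dots> = (\<Sum>k\<le>n. \<Sum>j\<le>m. of_nat (m choose j) * (fact j * fps_nth (P k) j) * of_nat (N choose k) * y^k
        * (fact n * fact (m-j) * fps_nth (Q k) (m-j)))"
  proof -
    have "of_nat (m choose j) * fact j * fact (m-j) = (fact m :: real)" if "j \<le> m" for j
    proof -
      have "real (fact j * fact (m - j) * (m choose j)) = real (fact m)"
        using binomial_fact_lemma[OF that] by (simp only:)
      then have h: "fact j * fact (m - j) * real (m choose j) = (fact m :: real)"
        unfolding of_nat_mult of_nat_fact .
      show ?thesis using h by (metis mult.commute mult.assoc)
    qed
    note fj = this
    show ?thesis
      unfolding sum_distrib_left atLeast0AtMost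
    proof (rule sum.cong[OF refl], rule sum.cong[OF refl])
      fix k j assume "j \<in> {..m}"
      then have "fact m = (of_nat (m choose j) * fact j * fact (m-j) :: real)" using fj by simp
      then show "fact m * fact n * (of_nat (N choose k) * y ^ k * (fps_nth (P k) j * fps_nth (Q k) (m - j))) =
         of_nat (m choose j) * (fact j * fps_nth (P k) j) * of_nat (N choose k) * y ^ k * (fact n * fact (m - j) * fps_nth (Q k) (m - j))"
        by (simp only: mult_ac)
    qed
  qed
  finally show ?thesis by (simp add: P_def Q_def)
qed



definition polyfun :: "(real \<Rightarrow> real) \<Rightarrow> bool" where
  "polyfun f \<longleftrightarrow> (\<exists>p. \<forall>x. f x = poly p x)"

lemma polyfun_const: "polyfun (\<lambda>x. c)"
  unfolding polyfun_def by (rule exI[of _ "[:c:]"]) simp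

lemma polyfun_id: "polyfun (\<lambda>x. x)"
  unfolding polyfun_def by (rule exI[of _ "[:0, 1:]"]) simp

lemma polyfun_add: "polyfun f \<Longrightarrow> polyfun g \<Longrightarrow> polyfun (\<lambda>x. f x + g x)"
  unfolding polyfun_def by (metis poly_add)

lemma polyfun_diff: "polyfun f \<Longrightarrow> polyfun g \<Longrightarrow> polyfun (\<lambda>x. f x - g x)"
  unfolding polyfun_def by (metis poly_diff)

lemma polyfun_mult: "polyfun f \<Longrightarrow> polyfun g \<Longrightarrow> polyfun (\<lambda>x. f x * g x)"
  unfolding polyfun_def by (metis poly_mult)

lemma polyfun_sum: "finite S \<Longrightarrow> (\<And>i. i \<in> S \<Longrightarrow> polyfun (f i)) \<Longrightarrow> polyfun (\<lambda>x. \<Sum>i\<in>S. f i x)"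
  by (induction S rule: finite_induct) (auto intro: polyfun_const polyfun_add)

lemma polyfun_prod: "finite S \<Longrightarrow> (\<And>i. i \<in> S \<Longrightarrow> polyfun (f i)) \<Longrightarrow> polyfun (\<lambda>x. \<Prod>i\<in>S. f i x)"
  by (induction S rule: finite_induct) (auto intro: polyfun_const polyfun_mult)

lemma polyfun_gchoose: "polyfun (\<lambda>x. (x + c) gchoose k)"
proof -
  have "polyfun (\<lambda>x. (\<Prod>i=0..<k. (x + c) - of_nat i) * (1 / fact k))"
    by (intro polyfun_mult polyfun_prod polyfun_diff polyfun_add polyfun_id polyfun_const) auto
  then show ?thesis by (simp add: gbinomial_prod_rev)
qed

lemma polyfun_zero:
  assumes "polyfun f" "\<And>N::nat. f (real N) = 0"
  shows "f x = 0"
proof -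
  obtain p where p: "\<And>x. f x = poly p x" using assms(1) unfolding polyfun_def by blast
  show ?thesis
  proof (cases "p = 0")
    case True then show ?thesis using p by simp
  next
    case False
    then have "finite {x. poly p x = 0}" by (rule poly_roots_finite)
    moreover have "range real \<subseteq> {x. poly p x = 0}" using assms(2) p by auto
    ultimately have "finite (range real)" by (rule finite_subset[rotated])
    then have "finite (UNIV :: nat set)" by (rule finite_imageD) (simp add: inj_on_def)
    then show ?thesis by simp
  qed
qed

lemma falling_gchoose: "falling x k = fact k * (x gchoose k)"
  by (simp add: falling_def gbinomial_mult_fact atLeast0LessThan)

lemma exp_ge_term:
  fixes z :: real
  assumes "z \<ge> 0"
  shows "z ^ q / fact q \<le> exp z"
proof -
  have s: "(\<lambda>n. z ^ n / fact n) sums exp z"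
    using exp_converges[of z] by (simp add: divide_inverse mult.commute)
  have "(\<Sum>n\<in>{q}. z ^ n / fact n) \<le> (\<Sum>n. z ^ n / fact n)"
    by (rule sum_le_suminf) (use s assms in \<open>auto simp: sums_iff\<close>)
  then show ?thesis using s by (simp add: sums_iff)
qed

lemma moments_integrable:
  fixes Y :: "'a \<Rightarrow> real" and r0 :: real
  assumes "Y \<in> borel_measurable M" "r0 > 0" "\<forall>t. \<bar>t\<bar> < r0 \<longrightarrow> integrable M (\<lambda>\<omega>. exp (t * Y \<omega>))"
  shows "integrable M (\<lambda>\<omega>. Y \<omega> ^ q)"
proof -
  define r where "r = r0 / 2"
  have r: "r > 0" "\<bar>r\<bar> < r0" "\<bar>-r\<bar> < r0" using assms(2) by (auto simp: r_def)
  have i1: "integrable M (\<lambda>\<omega>. exp (r * Y \<omega>))" and i2: "integrable M (\<lambda>\<omega>. exp ((-r) * Y \<omega>))"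
    using assms(3) r by blast+
  have int: "integrable M (\<lambda>\<omega>. fact q / r ^ q * (exp (r * Y \<omega>) + exp ((-r) * Y \<omega>)))"
    using i1 i2 by auto
  show ?thesis
  proof (rule Bochner_Integration.integrable_bound[OF int])
    show "(\<lambda>\<omega>. Y \<omega> ^ q) \<in> borel_measurable M" using assms(1) by measurable
    show "AE \<omega> in M. norm (Y \<omega> ^ q) \<le> norm (fact q / r ^ q * (exp (r * Y \<omega>) + exp ((-r) * Y \<omega>)))"
    proof (rule AE_I2)
      fix \<omega>
      let ?z = "r * \<bar>Y \<omega>\<bar>"
      have z0: "?z \<ge> 0" using r by simp
      have "?z ^ q / fact q \<le> exp ?z" by (rule exp_ge_term[OF z0])
      also have "exp ?z \<le> exp (r * Y \<omega>) + exp ((-r) * Y \<omega>)"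
        by (cases "Y \<omega> \<ge> 0") auto
      finally have h: "r ^ q * \<bar>Y \<omega>\<bar> ^ q / fact q \<le> exp (r * Y \<omega>) + exp ((-r) * Y \<omega>)"
        by (simp add: power_mult_distrib)
      have "\<bar>Y \<omega>\<bar> ^ q = (fact q / r ^ q) * (r ^ q * \<bar>Y \<omega>\<bar> ^ q / fact q)"
        using r by simp
      also have "\<dots> \<le> (fact q / r ^ q) * (exp (r * Y \<omega>) + exp ((-r) * Y \<omega>))"
        using h r by (intro mult_left_mono) auto
      finally show "norm (Y \<omega> ^ q) \<le> norm (fact q / r ^ q * (exp (r * Y \<omega>) + exp ((-r) * Y \<omega>)))"
        using r by (simp add: power_abs abs_mult add_pos_pos)
    qed
  qed
qed



lemma fps_exp_sum: "finite I \<Longrightarrow> fps_exp (\<Sum>i\<in>I. z i) = (\<Prod>i\<in>I. fps_exp (z i :: real))"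
  by (induction I rule: finite_induct) (simp_all add: fps_exp_add_mult)

lemma multinom:
  fixes z :: "'i \<Rightarrow> real"
  assumes "finite I"
  shows "(\<Sum>i\<in>I. z i) ^ p = fact p * (\<Sum>b\<in>{b \<in> I \<rightarrow>\<^sub>E {..p}. sum b I = p}. \<Prod>i\<in>I. z i ^ b i / fact (b i))"
proof -
  have "(\<Sum>i\<in>I. z i) ^ p / fact p = fps_nth (fps_exp (\<Sum>i\<in>I. z i)) p"
    by simp
  also have "\<dots> = fps_nth (\<Prod>i\<in>I. fps_exp (z i)) p"
    by (simp add: fps_exp_sum assms)
  also have "\<dots> = (\<Sum>b\<in>{b \<in> I \<rightarrow>\<^sub>E {..p}. sum b I = p}. \<Prod>i\<in>I. z i ^ b i / fact (b i))"
    by (simp add: fps_prod_nth assms)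
  finally show ?thesis by (simp add: field_simps)
qed

lemma expect_formula:
  fixes Y :: "'a \<Rightarrow> real" and Ys :: "nat \<Rightarrow> 'a \<Rightarrow> real"
  assumes "prob_space M"
    and "Y \<in> borel_measurable M"
    and "\<forall>j\<ge>1. Ys j \<in> borel_measurable M"
    and "\<forall>j\<ge>1. distr M borel (Ys j) = distr M borel Y"
    and "prob_space.indep_vars M (\<lambda>_. borel) Ys {1..}"
    and mom: "\<And>q. integrable M (\<lambda>\<omega>. Y \<omega> ^ q)"
  shows "(\<integral>\<omega>. (\<Sum>i=1..k. Ys i \<omega>) ^ p * (\<Prod>i=1..k. Ys i \<omega> ^ l i) \<partial>M)
     = fact p * (\<Sum>b\<in>{b \<in> {1..k} \<rightarrow>\<^sub>E {..p}. sum b {1..k} = p}. \<Prod>i=1..k. (\<integral>\<omega>. Y \<omega> ^ (l i + b i) \<partial>M) / fact (b i))"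
proof -
  interpret prob_space M by fact
  note [measurable] = assms(2)
  have Ysm[measurable]: "Ys i \<in> borel_measurable M" if "i \<in> {1..k}" for i
    using assms(3) that by auto
  have Ysq: "integrable M (\<lambda>\<omega>. Ys i \<omega> ^ q) \<and> (\<integral>\<omega>. Ys i \<omega> ^ q \<partial>M) = (\<integral>\<omega>. Y \<omega> ^ q \<partial>M)"
    if "i \<in> {1..k}" for i q
  proof
    have d: "distr M borel (Ys i) = distr M borel Y" using assms(4) that by auto
    have "integrable (distr M borel Y) (\<lambda>z. z ^ q :: real)"
      using integrable_distr_eq[of Y M borel "\<lambda>z. z ^ q :: real"] mom by simp
    then show "integrable M (\<lambda>\<omega>. Ys i \<omega> ^ q)"
      using integrable_distr_eq[of "Ys i" M borel "\<lambda>z. z ^ q :: real"] d Ysm[OF that] by simp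
    have "(\<integral>\<omega>. Ys i \<omega> ^ q \<partial>M) = (\<integral>z. z ^ q \<partial>distr M borel (Ys i))"
      using integral_distr[of "Ys i" M borel "\<lambda>z. z ^ q :: real"] Ysm[OF that] by simp
    also have "\<dots> = (\<integral>z. z ^ q \<partial>distr M borel Y)" using d by simp
    also have "\<dots> = (\<integral>\<omega>. Y \<omega> ^ q \<partial>M)"
      using integral_distr[of Y M borel "\<lambda>z. z ^ q :: real"] by simp
    finally show "(\<integral>\<omega>. Ys i \<omega> ^ q \<partial>M) = (\<integral>\<omega>. Y \<omega> ^ q \<partial>M)" .
  qed
  define B where "B = {b \<in> {1..k} \<rightarrow>\<^sub>E {..p}. sum b {1..k} = p}"
  have finB: "finite B" unfolding B_def by (auto intro!: finite_PiE)
  have ind: "indep_vars (\<lambda>_. borel) (\<lambda>i \<omega>. Ys i \<omega> ^ (l i + b i) / fact (b i)) {1..k}" for b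
  proof -
    have "indep_vars (\<lambda>_. borel) Ys {1..k}"
      using assms(5) by (rule indep_vars_subset) auto
    then have "indep_vars (\<lambda>_. borel) (\<lambda>i \<omega>. (\<lambda>z. z ^ (l i + b i) / fact (b i)) (Ys i \<omega>)) {1..k}"
      by (rule indep_vars_compose2) measurable
    then show ?thesis by simp
  qed
  have intX: "integrable M (\<lambda>\<omega>. Ys i \<omega> ^ q / c)" if "i \<in> {1..k}" for i q c
    using Ysq[OF that, of q] by auto
  have pw: "(\<Sum>i=1..k. Ys i \<omega>) ^ p * (\<Prod>i=1..k. Ys i \<omega> ^ l i)
      = (\<Sum>b\<in>B. fact p * (\<Prod>i=1..k. Ys i \<omega> ^ (l i + b i) / fact (b i)))" for \<omega>
  proof -
    have "(\<Sum>i=1..k. Ys i \<omega>) ^ p * (\<Prod>i=1..k. Ys i \<omega> ^ l i)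
        = fact p * (\<Sum>b\<in>B. (\<Prod>i=1..k. Ys i \<omega> ^ b i / fact (b i)) * (\<Prod>i=1..k. Ys i \<omega> ^ l i))"
      unfolding multinom[of "{1..k}", OF finite_atLeastAtMost] B_def by (simp add: mult.assoc sum_distrib_right)
    also have "\<dots> = (\<Sum>b\<in>B. fact p * (\<Prod>i=1..k. Ys i \<omega> ^ (l i + b i) / fact (b i)))"
      unfolding sum_distrib_left prod.distrib[symmetric] by (simp add: power_add mult_ac)
    finally show ?thesis .
  qed
  have "(\<integral>\<omega>. (\<Sum>i=1..k. Ys i \<omega>) ^ p * (\<Prod>i=1..k. Ys i \<omega> ^ l i) \<partial>M)
      = (\<integral>\<omega>. (\<Sum>b\<in>B. fact p * (\<Prod>i=1..k. Ys i \<omega> ^ (l i + b i) / fact (b i))) \<partial>M)"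
    unfolding pw ..
  also have "\<dots> = (\<Sum>b\<in>B. (\<integral>\<omega>. fact p * (\<Prod>i=1..k. Ys i \<omega> ^ (l i + b i) / fact (b i)) \<partial>M))"
  proof (rule Bochner_Integration.integral_sum)
    fix b assume "b \<in> B"
    show "integrable M (\<lambda>\<omega>. fact p * (\<Prod>i = 1..k. Ys i \<omega> ^ (l i + b i) / fact (b i)))"
      by (intro integrable_mult_right indep_vars_integrable[OF _ ind] intX) auto
  qed
  also have "\<dots> = (\<Sum>b\<in>B. fact p * (\<integral>\<omega>. (\<Prod>i=1..k. Ys i \<omega> ^ (l i + b i) / fact (b i)) \<partial>M))"
    by simp
  also have "\<dots> = (\<Sum>b\<in>B. fact p * (\<Prod>i=1..k. (\<integral>\<omega>. Ys i \<omega> ^ (l i + b i) / fact (b i) \<partial>M)))"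
    by (subst indep_vars_lebesgue_integral[OF _ ind]) (auto intro: intX)
  also have "\<dots> = (\<Sum>b\<in>B. fact p * (\<Prod>i=1..k. (\<integral>\<omega>. Y \<omega> ^ (l i + b i) \<partial>M) / fact (b i)))"
    using Ysq by (auto intro!: sum.cong prod.cong)
  finally show ?thesis by (simp add: B_def sum_distrib_left)
qed



lemma polyfun_gchoose': "polyfun (\<lambda>x. (x - c) gchoose k)"
  using polyfun_gchoose[of "-c" k] by simp

lemma polyfun_gchoose0: "polyfun (\<lambda>x. x gchoose k)"
  using polyfun_gchoose[of 0 k] by simp

lemma prod_split_div:
  fixes mu x z :: "nat \<Rightarrow> real"
  shows "(\<Prod>i\<in>S. mu i / (x i * z i)) = (\<Prod>i\<in>S. mu i / z i) / (\<Prod>i\<in>S. x i)"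
proof -
  have "(\<Prod>i\<in>S. mu i / (x i * z i)) = (\<Prod>i\<in>S. (mu i / z i) / x i)"
    by (simp add: mult.commute)
  also have "\<dots> = (\<Prod>i\<in>S. mu i / z i) / (\<Prod>i\<in>S. x i)"
    by (rule prod_dividef)
  finally show ?thesis .
qed

theorem theorem2p2:
  fixes M :: "'a measure" and Y :: "'a \<Rightarrow> real" and Ys :: "nat \<Rightarrow> 'a \<Rightarrow> real"
    and r0 x y :: real and m n :: nat
  assumes "prob_space M"
    and "Y \<in> borel_measurable M"
    and "r0 > 0"
    and "\<forall>t. \<bar>t\<bar> < r0 \<longrightarrow> integrable M (\<lambda>\<omega>. exp (t * Y \<omega>))"
    and "\<forall>j\<ge>1. Ys j \<in> borel_measurable M"
    and "\<forall>j\<ge>1. distr M borel (Ys j) = distr M borel Y"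
    and "prob_space.indep_vars M (\<lambda>_. borel) Ys {1..}"
  shows "phi M Y (m + n) x y =
    (\<Sum>k\<le>n. \<Sum>j\<le>m. real (m choose j) * phi M Y j (x - real k) y * falling x k * y ^ k
        * (1 / fact k)
        * (\<Sum>l \<in> {l \<in> {1..k} \<rightarrow>\<^sub>E {1..n}. (\<Sum>i=1..k. l i) = n}.
             (fact n / (\<Prod>i=1..k. fact (l i)))
             * prob_space.expectation M
                 (\<lambda>\<omega>. (\<Sum>i=1..k. Ys i \<omega>) ^ (m - j) * (\<Prod>i=1..k. Ys i \<omega> ^ l i))))"
proof -
  interpret prob_space M by fact
  have mom: "\<And>q. integrable M (\<lambda>\<omega>. Y \<omega> ^ q)"
    using moments_integrable[OF assms(2,3,4)] .
  define mu where "mu q = (\<integral>\<omega>. Y \<omega> ^ q \<partial>M)" for q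
  define A where "A = mgf_fps M Y - 1"
  define u where "u = fps_const y * A"
  define G where "G = Tsh A - fps_const A"
  have mgf_nth: "fps_nth (mgf_fps M Y) q = mu q / fact q" for q
    by (simp add: mgf_fps_def mu_def)
  have A0: "fps_nth A 0 = 0"
    by (simp add: A_def mgf_nth mu_def prob_space)
  have u0: "fps_nth u 0 = 0" by (simp add: u_def A0)
  have G0: "fps_nth G 0 = 0"
    by (simp add: G_def Tsh_def fps_eq_iff)
  have Gnth: "fps_nth (fps_nth G a) b = mu (a+b) / (fact a * fact b)" if "a \<ge> 1" for a b
  proof -
    have "fps_nth (fps_nth G a) b = of_nat ((a+b) choose a) * fps_nth A (a+b)"
      using that by (simp add: G_def T_nth)
    also have "\<dots> = of_nat ((a+b) choose a) * (mu (a+b) / fact (a+b))"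
      using that by (simp add: A_def mgf_nth)
    also have "\<dots> = mu (a+b) / (fact a * fact b)"
      by (simp add: binomial_fact)
    finally show ?thesis .
  qed
  define L where "L k = {l \<in> {1..k} \<rightarrow>\<^sub>E {1..n}. (\<Sum>i=1..k. l i) = n}" for k :: nat
  define B where "B k p = {b \<in> {1..k} \<rightarrow>\<^sub>E {..p}. sum b {1..k} = p}" for k p :: nat
  have finL: "finite (L k)" for k
  proof -
    have "finite ({1..k} \<rightarrow>\<^sub>E {1..n::nat})" by (rule finite_PiE) auto
    then show ?thesis unfolding L_def by (rule finite_subset[rotated]) auto
  qed
  have finB: "finite (B k p)" for k p unfolding B_def by (auto intro!: finite_PiE)
  have Gk: "fps_nth (fps_nth (G^k) n) p = (\<Sum>a\<in>L k. \<Sum>b\<in>B k p. \<Prod>i=1..k. mu (a i + b i) / (fact (a i) * fact (b i)))" for k p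
  proof -
    have "G^k = (\<Prod>i\<in>{1..k}. G)" by simp
    then have "fps_nth (G^k) n = (\<Sum>a\<in>{a \<in> {1..k} \<rightarrow>\<^sub>E {..n}. sum a {1..k} = n}. \<Prod>i\<in>{1..k}. fps_nth G (a i))"
      by (simp only: fps_prod_nth[OF finite_atLeastAtMost])
    also have "\<dots> = (\<Sum>a\<in>L k. \<Prod>i\<in>{1..k}. fps_nth G (a i))"
    proof (rule sum.mono_neutral_right)
      show "finite {a \<in> {1..k} \<rightarrow>\<^sub>E {..n}. sum a {1..k} = n}" by (auto intro!: finite_PiE)
      show "L k \<subseteq> {a \<in> {1..k} \<rightarrow>\<^sub>E {..n}. sum a {1..k} = n}"
        unfolding L_def by (auto simp: PiE_def Pi_def)
      show "\<forall>a\<in>{a \<in> {1..k} \<rightarrow>\<^sub>E {..n}. sum a {1..k} = n} - L k. (\<Prod>i\<in>{1..k}. fps_nth G (a i)) = 0"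
      proof
        fix a assume a: "a \<in> {a \<in> {1..k} \<rightarrow>\<^sub>E {..n}. sum a {1..k} = n} - L k"
        then obtain i where i: "i \<in> {1..k}" "a i = 0"
          unfolding L_def by (force simp: PiE_def Pi_def)
        show "(\<Prod>i\<in>{1..k}. fps_nth G (a i)) = 0"
          using i G0 by (intro prod_zero) (auto intro!: bexI[of _ i])
      qed
    qed
    finally have "fps_nth (G^k) n = (\<Sum>a\<in>L k. \<Prod>i\<in>{1..k}. fps_nth G (a i))" .
    then have "fps_nth (fps_nth (G^k) n) p = (\<Sum>a\<in>L k. \<Sum>b\<in>B k p. \<Prod>i\<in>{1..k}. fps_nth (fps_nth G (a i)) (b i))"
      by (simp add: fps_sum_nth fps_prod_nth B_def)
    also have "\<dots> = (\<Sum>a\<in>L k. \<Sum>b\<in>B k p. \<Prod>i=1..k. mu (a i + b i) / (fact (a i) * fact (b i)))"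
    proof (intro sum.cong refl prod.cong)
      fix a b i assume "a \<in> L k" "i \<in> {1..k}"
      then have "a i \<ge> 1" unfolding L_def by (auto simp: PiE_def Pi_def)
      then show "fps_nth (fps_nth G (a i)) (b i) = mu (a i + b i) / (fact (a i) * fact (b i))"
        by (rule Gnth)
    qed
    finally show ?thesis .
  qed
  have Keq: "(\<Sum>l \<in> L k. (fact n / (\<Prod>i=1..k. fact (l i)))
             * expectation (\<lambda>\<omega>. (\<Sum>i=1..k. Ys i \<omega>) ^ p * (\<Prod>i=1..k. Ys i \<omega> ^ l i)))
        = fact n * fact p * fps_nth (fps_nth (G^k) n) p" for k p
  proof -
    have "(\<Sum>l \<in> L k. (fact n / (\<Prod>i=1..k. fact (l i)))
             * expectation (\<lambda>\<omega>. (\<Sum>i=1..k. Ys i \<omega>) ^ p * (\<Prod>i=1..k. Ys i \<omega> ^ l i)))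
        = (\<Sum>l \<in> L k. (fact n / (\<Prod>i=1..k. fact (l i))) * (fact p * (\<Sum>b\<in>B k p. \<Prod>i=1..k. mu (l i + b i) / fact (b i))))"
      unfolding B_def mu_def
      using expect_formula[OF assms(1,2,5,6,7) mom] by simp
    also have "\<dots> = fact n * fact p * (\<Sum>a\<in>L k. \<Sum>b\<in>B k p. \<Prod>i=1..k. mu (a i + b i) / (fact (a i) * fact (b i)))"
      unfolding sum_distrib_left prod_split_div
      by (intro sum.cong refl) (simp add: field_simps)
    finally show ?thesis using Gk by simp
  qed
  have phi_eq: "phi M Y j x' y = fact j * (\<Sum>i\<le>j. (x' gchoose i) * fps_nth (u^i) j)" for j x'
    by (simp add: phi_def fps_binom_pow_def u_def A_def)
  define F where "F x' = phi M Y (m + n) x' y - (\<Sum>k\<le>n. \<Sum>j\<le>m. real (m choose j) * phi M Y j (x' - real k) y * falling x' k * y ^ k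
        * (1 / fact k) * (fact n * fact (m-j) * fps_nth (fps_nth (G^k) n) (m-j)))" for x'
  have polyF: "polyfun F"
    unfolding F_def phi_eq falling_def
    by (intro polyfun_diff polyfun_mult polyfun_sum polyfun_prod polyfun_const polyfun_id polyfun_gchoose' polyfun_gchoose0
        finite_atMost finite_lessThan)
  have FN: "F (real N) = 0" for N
  proof -
    have lhs: "phi M Y (m + n) (real N) y = fact (m+n) * fps_nth ((1+u)^N) (m+n)"
      unfolding phi_def unfolding A_def[symmetric] unfolding u_def[symmetric] unfolding binom_pow_nat[OF u0] ..
    have trm: "real (m choose j) * phi M Y j (real N - real k) y * falling (real N) k * y ^ k
        * (1 / fact k) * (fact n * fact (m-j) * fps_nth (fps_nth (G^k) n) (m-j))
       = of_nat (m choose j) * (fact j * fps_nth ((1+u)^(N-k)) j) * of_nat (N choose k) * y^k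
        * (fact n * fact (m-j) * fps_nth (fps_nth (G^k) n) (m-j))" for j k
    proof (cases "k \<le> N")
      case True
      have "phi M Y j (real N - real k) y = fact j * fps_nth (fps_binom_pow u (real (N-k))) j"
        using True by (simp add: phi_def u_def A_def of_nat_diff)
      also have "\<dots> = fact j * fps_nth ((1+u)^(N-k)) j"
        unfolding binom_pow_nat[OF u0] ..
      finally have "phi M Y j (real N - real k) y = fact j * fps_nth ((1+u)^(N-k)) j" .
      note p1 = this
      have p2: "falling (real N) k * (1 / fact k) = of_nat (N choose k)"
        by (simp add: falling_gchoose binomial_gbinomial)
      have "real (m choose j) * phi M Y j (real N - real k) y * falling (real N) k * y ^ k
        * (1 / fact k) * (fact n * fact (m-j) * fps_nth (fps_nth (G^k) n) (m-j))
        = real (m choose j) * phi M Y j (real N - real k) y * (falling (real N) k * (1 / fact k)) * y ^ k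
          * (fact n * fact (m-j) * fps_nth (fps_nth (G^k) n) (m-j))"
        by (simp only: mult_ac)
      also have "\<dots> = of_nat (m choose j) * (fact j * fps_nth ((1+u)^(N-k)) j) * of_nat (N choose k) * y^k
        * (fact n * fact (m-j) * fps_nth (fps_nth (G^k) n) (m-j))"
        unfolding p1 p2 ..
      finally show ?thesis .
    next
      case False
      then have "falling (real N) k = 0" by (simp add: falling_gchoose binomial_gbinomial[symmetric])
      then show ?thesis using False by simp
    qed
    show ?thesis
      unfolding F_def lhs trm nat_identity[OF A0, where y=y and m=m and n=n and N=N, folded u_def G_def] by simp
  qed
  have F0: "F x = 0" using polyfun_zero[OF polyF FN] .
  show ?thesis
    using F0 unfolding F_def L_def[symmetric] Keq by simp
qed

end
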